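(* Let $\Omega=(a_1,b_1)\times(a_2,b_2)\times\cdots\times(a_d,b_d)\subset\mathbb{R}^d$ with $0\in\Omega$, and put $\underline\hbar=\min\{|a_1|,|b_1|,\dots,|a_d|,|b_d|\}$, $\overline\hbar=\max\{|a_1|,|b_1|,\dots,|a_d|,|b_d|\}$. Then for all $u\in H^1(\Omega)$, $$\|\gamma u\|_{L^2(\partial\Omega)}\le\sqrt{\frac{d+\overline\hbar^2}{\underline\hbar}}\,\|u\|_{H^1(\Omega)},$$ where $\gamma$ denotes the trace operator.
   Context: $\|u\|_{H^1(\Omega)}=\big(\|\nabla u\|^2_{L^2(\Omega)}+\|u\|^2_{L^2(\Omega)}\big)^{1/2}$. *)

theory Defs
  imports "HOL-Analysis.Analysis"
begin

definition partial :: "'n::finite \<Rightarrow> (real^'n \<Rightarrow> real) \<Rightarrow> real^'n \<Rightarrow> real" where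
  "partial i f x = deriv (\<lambda>t. f (x + t *\<^sub>R axis i 1)) 0"

fun partials :: "'n::finite list \<Rightarrow> (real^'n \<Rightarrow> real) \<Rightarrow> real^'n \<Rightarrow> real" where
  "partials [] f = f"
| "partials (i # is) f = partial i (partials is f)"

definition smooth_fun :: "(real^'n::finite \<Rightarrow> real) \<Rightarrow> bool" where
  "smooth_fun f \<longleftrightarrow> (\<forall>is. continuous_on UNIV (partials is f) \<and>
      (\<forall>i x. (\<lambda>t. partials is f (x + t *\<^sub>R axis i 1)) differentiable (at 0)))"

definition test_fun :: "(real^'n::finite) set \<Rightarrow> (real^'n \<Rightarrow> real) \<Rightarrow> bool" where
  "test_fun \<Omega> \<phi> \<longleftrightarrow> smooth_fun \<phi> \<and> compact (closure {x. \<phi> x \<noteq> 0})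
      \<and> closure {x. \<phi> x \<noteq> 0} \<subseteq> \<Omega>"

definition L2_on :: "(real^'n::finite) set \<Rightarrow> (real^'n \<Rightarrow> real) \<Rightarrow> bool" where
  "L2_on \<Omega> u \<longleftrightarrow> u \<in> borel_measurable (lebesgue_on \<Omega>) \<and> set_integrable lebesgue \<Omega> (\<lambda>x. (u x)^2)"

definition weak_grad :: "(real^'n::finite) set \<Rightarrow> (real^'n \<Rightarrow> real) \<Rightarrow> ('n \<Rightarrow> real^'n \<Rightarrow> real) \<Rightarrow> bool" where
  "weak_grad \<Omega> u G \<longleftrightarrow> (\<forall>i. L2_on \<Omega> (G i) \<and>
     (\<forall>\<phi>. test_fun \<Omega> \<phi> \<longrightarrow>
        (LINT x:\<Omega>|lebesgue. u x * partial i \<phi> x) = - (LINT x:\<Omega>|lebesgue. G i x * \<phi> x)))"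

definition H1 :: "(real^'n::finite) set \<Rightarrow> (real^'n \<Rightarrow> real) \<Rightarrow> ('n \<Rightarrow> real^'n \<Rightarrow> real) \<Rightarrow> bool" where
  "H1 \<Omega> u G \<longleftrightarrow> L2_on \<Omega> u \<and> weak_grad \<Omega> u G"

definition h1_norm :: "(real^'n::finite) set \<Rightarrow> (real^'n \<Rightarrow> real) \<Rightarrow> ('n \<Rightarrow> real^'n \<Rightarrow> real) \<Rightarrow> real" where
  "h1_norm \<Omega> u G = sqrt ((LINT x:\<Omega>|lebesgue. (\<Sum>i\<in>UNIV. (G i x)^2)) + (LINT x:\<Omega>|lebesgue. (u x)^2))"

section \<open>Boundary of the box and L2 on the boundary (surface measure = (d-1)-dim Lebesgue on faces)\<close>

definition face_pt :: "'n::finite \<Rightarrow> real \<Rightarrow> ('n \<Rightarrow> real) \<Rightarrow> real^'n" where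
  "face_pt i c y = (\<chi> j. if j = i then c else y j)"

definition face_box :: "real^'n::finite \<Rightarrow> real^'n \<Rightarrow> 'n \<Rightarrow> ('n \<Rightarrow> real) set" where
  "face_box a b i = PiE (UNIV - {i}) (\<lambda>j. {a$j<..<b$j})"

definition face_measure :: "'n::finite \<Rightarrow> ('n \<Rightarrow> real) measure" where
  "face_measure i = PiM (UNIV - {i}) (\<lambda>_. lborel)"

definition bdry_L2 :: "real^'n::finite \<Rightarrow> real^'n \<Rightarrow> (real^'n \<Rightarrow> real) \<Rightarrow> bool" where
  "bdry_L2 a b g \<longleftrightarrow> (\<forall>i. \<forall>c\<in>{a$i, b$i}.
      (\<lambda>y. g (face_pt i c y)) \<in> borel_measurable (face_measure i) \<and>
      set_integrable (face_measure i) (face_box a b i) (\<lambda>y. (g (face_pt i c y))^2))"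

definition bdry_sq_norm :: "real^'n::finite \<Rightarrow> real^'n \<Rightarrow> (real^'n \<Rightarrow> real) \<Rightarrow> real" where
  "bdry_sq_norm a b g = (\<Sum>i\<in>UNIV.
      (LINT y:face_box a b i|face_measure i. (g (face_pt i (a$i) y))^2)
    + (LINT y:face_box a b i|face_measure i. (g (face_pt i (b$i) y))^2))"

section \<open>Trace: L2(boundary)-limit of boundary values of smooth functions converging in H1\<close>

definition is_trace :: "real^'n::finite \<Rightarrow> real^'n \<Rightarrow> (real^'n \<Rightarrow> real) \<Rightarrow> ('n \<Rightarrow> real^'n \<Rightarrow> real)
     \<Rightarrow> (real^'n \<Rightarrow> real) \<Rightarrow> bool" where
  "is_trace a b u G tr \<longleftrightarrow> bdry_L2 a b tr \<and>
     (\<exists>v::nat \<Rightarrow> real^'n \<Rightarrow> real. (\<forall>n. smooth_fun (v n)) \<and>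
        (\<lambda>n. h1_norm (box a b) (\<lambda>x. v n x - u x) (\<lambda>i x. partial i (v n) x - G i x)) \<longlonglongrightarrow> 0 \<and>
        (\<lambda>n. sqrt (bdry_sq_norm a b (\<lambda>x. v n x - tr x))) \<longlonglongrightarrow> 0)"

definition hbar_lo :: "real^'n::finite \<Rightarrow> real^'n \<Rightarrow> real" where
  "hbar_lo a b = Min (range (\<lambda>i. min \<bar>a$i\<bar> \<bar>b$i\<bar>))"

definition hbar_hi :: "real^'n::finite \<Rightarrow> real^'n \<Rightarrow> real" where
  "hbar_hi a b = Max (range (\<lambda>i. max \<bar>a$i\<bar> \<bar>b$i\<bar>))"

end

theory Submission
  imports Defs
begin

lemma measurable_vec_of_fun[measurable]:
  "(\<lambda>f. (\<chi> j. f j) :: real^'n::finite) \<in> borel_measurable (PiM UNIV (\<lambda>_. lborel))"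
  apply (subst borel_measurable_euclidean_space)
  apply (auto simp: Basis_vec_def inner_axis)
  done

lemma lborel_vec:
  "(lborel :: (real^'n::finite) measure) = distr (PiM UNIV (\<lambda>_. lborel)) borel (\<lambda>f. \<chi> j. f j)"
proof (rule lborel_eqI)
  interpret product_sigma_finite "\<lambda>_::'n. lborel::real measure" by standard
  fix l u :: "real^'n" assume le: "\<And>b. b \<in> Basis \<Longrightarrow> l \<bullet> b \<le> u \<bullet> b"
  have le': "l $ j \<le> u $ j" for j using le[of "axis j 1"] by (auto simp: Basis_vec_def inner_axis)
  have vim: "(\<lambda>f. \<chi> j. f j) -` box l u \<inter> space (PiM UNIV (\<lambda>_. lborel)) = PiE UNIV (\<lambda>j. {l$j<..<u$j})"
    by (auto simp: space_PiM mem_box_cart PiE_def extensional_def Pi_iff)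
  have "emeasure (distr (PiM UNIV (\<lambda>_. lborel)) borel (\<lambda>f. \<chi> j. f j)) (box l u)
      = emeasure (PiM UNIV (\<lambda>_. lborel)) (PiE UNIV (\<lambda>j. {l$j<..<u$j}))"
    by (subst emeasure_distr) (auto simp: vim)
  also have "\<dots> = (\<Prod>j\<in>UNIV. ennreal (u$j - l$j))"
    by (subst emeasure_PiM) (auto simp: le')
  also have "\<dots> = ennreal (\<Prod>j\<in>UNIV. (u$j - l$j))"
    by (rule prod_ennreal) (auto simp: le')
  also have "(\<Prod>j\<in>UNIV. (u$j - l$j)) = (\<Prod>b\<in>Basis. (u - l) \<bullet> b)"
  proof -
    have B: "Basis = (\<lambda>j. axis j (1::real)) ` (UNIV::'n set)" by (auto simp: Basis_vec_def)
    have I: "inj (\<lambda>j. axis j (1::real) :: real^'n)" by (auto simp: inj_def axis_eq_axis)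
    show ?thesis unfolding B prod.reindex[OF I] by (simp add: inner_axis o_def)
  qed
  finally show "emeasure (distr (PiM UNIV (\<lambda>_. lborel)) borel (\<lambda>f. \<chi> j. f j)) (box l u) = (\<Prod>b\<in>Basis. (u - l) \<bullet> b)" 
    using le by (simp add: prod_nonneg)
qed simp


lemma young_aux:
  fixes s t p q H :: real
  assumes "s > 0" "\<bar>t\<bar> \<le> H"
  shows "2 * t * p * q \<le> s * p^2 + H^2 / s * q^2"
proof -
  have "0 \<le> (s*p - t*q)^2" by simp
  hence "2 * s * (t * p * q) \<le> s^2 * p^2 + t^2 * q^2" by (simp add: power2_eq_square algebra_simps)
  hence "2 * (t * p * q) \<le> s * p^2 + t^2 / s * q^2" using assms(1)
    by (simp add: field_simps power2_eq_square)
  moreover have "t^2 \<le> H^2" using assms(2) using abs_le_square_iff by (metis abs_ge_zero abs_of_nonneg order.trans)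
  hence "t^2 / s * q^2 \<le> H^2 / s * q^2" using assms(1) by (intro mult_right_mono divide_right_mono) auto
  ultimately show ?thesis by simp
qed

lemma one_dim:
  fixes \<phi> \<phi>' :: "real \<Rightarrow> real"
  assumes ab: "a < 0" "0 < b"
    and d: "\<And>t. (\<phi> has_real_derivative \<phi>' t) (at t)"
    and c: "continuous_on {a..b} \<phi>'"
    and L: "L \<le> -a" "L \<le> b" and H: "-a \<le> H" "b \<le> H" and s: "s > 0"
  shows "\<exists>I. ((\<lambda>t. (1+s) * (\<phi> t)^2 + H^2/s * (\<phi>' t)^2) has_integral I) {a<..<b}
             \<and> L * ((\<phi> a)^2 + (\<phi> b)^2) \<le> I"
proof -
  let ?\<psi> = "\<lambda>t. (1+s) * (\<phi> t)^2 + H^2/s * (\<phi>' t)^2"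
  let ?F = "\<lambda>t. t * (\<phi> t)^2"
  let ?F' = "\<lambda>t. (\<phi> t)^2 + 2 * t * \<phi> t * \<phi>' t"
  have cphi: "continuous_on {a..b} \<phi>"
    using d by (meson DERIV_isCont continuous_at_imp_continuous_on)
  have "((\<lambda>t. t * (\<phi> t)^2) has_real_derivative ?F' t) (at t)" for t
    using d[of t] by (auto intro!: derivative_eq_intros simp: power2_eq_square algebra_simps)
  hence "(?F' has_integral ?F b - ?F a) {a..b}"
    using ab by (intro fundamental_theorem_of_calculus) (auto simp: has_real_derivative_iff_has_vector_derivative[symmetric] intro: has_field_derivative_at_within)
  moreover have "?\<psi> integrable_on {a..b}"
    by (intro integrable_continuous_real continuous_intros cphi c)
  then obtain I where I: "(?\<psi> has_integral I) {a..b}" by blast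
  moreover have "?F' t \<le> ?\<psi> t" if "t \<in> {a..b}" for t
  proof -
    have "\<bar>t\<bar> \<le> H" using that H by auto
    from young_aux[OF s this, of "\<phi> t" "\<phi>' t"] show ?thesis by (simp add: algebra_simps)
  qed
  ultimately have "?F b - ?F a \<le> I" by (rule has_integral_le)
  moreover have "L * ((\<phi> a)^2 + (\<phi> b)^2) \<le> ?F b - ?F a"
  proof -
    have "L * (\<phi> a)^2 \<le> (-a) * (\<phi> a)^2" using L by (intro mult_right_mono) auto
    moreover have "L * (\<phi> b)^2 \<le> b * (\<phi> b)^2" using L by (intro mult_right_mono) auto
    ultimately show ?thesis by (simp add: algebra_simps)
  qed
  ultimately show ?thesis using I by (auto simp: has_integral_Icc_iff_Ioo)
qed


lemma face_pt_measurable[measurable]: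
  "face_pt i c \<in> borel_measurable (face_measure i)"
  unfolding face_measure_def
  apply (subst borel_measurable_euclidean_space)
  apply (clarsimp simp: Basis_vec_def inner_axis face_pt_def)
  subgoal for j by (cases "j = i") (auto intro: measurable_component_singleton)
  done

lemma nn_fubini_face:
  fixes g :: "real^'n::finite \<Rightarrow> ennreal"
  assumes [measurable]: "g \<in> borel_measurable borel"
  shows "(\<integral>\<^sup>+x. g x \<partial>lborel) = (\<integral>\<^sup>+y. (\<integral>\<^sup>+t. g (face_pt i t y) \<partial>lborel) \<partial>face_measure i)"
proof -
  interpret product_sigma_finite "\<lambda>_::'n. lborel::real measure" by standard
  have U: "insert i (UNIV - {i}) = UNIV" by auto
  have "(\<integral>\<^sup>+x. g x \<partial>lborel) = (\<integral>\<^sup>+f. g (\<chi> j. f j) \<partial>PiM UNIV (\<lambda>_. lborel))"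
    by (subst lborel_vec) (simp add: nn_integral_distr)
  also have "\<dots> = (\<integral>\<^sup>+f. g (\<chi> j. f j) \<partial>PiM (insert i (UNIV - {i})) (\<lambda>_. lborel))"
    by (simp only: U)
  also have "\<dots> = (\<integral>\<^sup>+y. (\<integral>\<^sup>+t. g (\<chi> j. (y(i:=t)) j) \<partial>lborel) \<partial>PiM (UNIV - {i}) (\<lambda>_. lborel))"
    by (rule product_nn_integral_insert) (auto simp: U)
  also have "\<dots> = (\<integral>\<^sup>+y. (\<integral>\<^sup>+t. g (face_pt i t y) \<partial>lborel) \<partial>face_measure i)"
    unfolding face_measure_def face_pt_def by (simp add: fun_upd_def)
  finally show ?thesis .
qed


lemma smooth_cont: "smooth_fun v \<Longrightarrow> continuous_on UNIV v"
  unfolding smooth_fun_def by (metis partials.simps(1))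

lemma smooth_cont_partial: "smooth_fun v \<Longrightarrow> continuous_on UNIV (partial i v)"
  unfolding smooth_fun_def by (metis partials.simps)

lemma face_pt_add: "face_pt i t y + s *\<^sub>R axis i 1 = face_pt i (s + t) y"
  by (simp add: vec_eq_iff face_pt_def axis_def)

lemma face_pt_eq: "face_pt i t y = face_pt i 0 y + t *\<^sub>R axis i 1"
  using face_pt_add[of i 0 y t] by simp

lemma continuous_face_pt[continuous_intros]: "continuous_on S (\<lambda>t. face_pt i t y)"
  by (subst face_pt_eq) (intro continuous_intros)

lemma smooth_deriv:
  assumes "smooth_fun v"
  shows "((\<lambda>t. v (face_pt i t y)) has_real_derivative partial i v (face_pt i t y)) (at t)"
proof -
  let ?x = "face_pt i t y"
  have "(\<lambda>s. v (?x + s *\<^sub>R axis i 1)) differentiable (at 0)"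
    using assms unfolding smooth_fun_def by (metis partials.simps(1))
  hence "((\<lambda>s. v (?x + s *\<^sub>R axis i 1)) has_real_derivative partial i v ?x) (at 0)"
    unfolding partial_def by (simp add: DERIV_deriv_iff_real_differentiable)
  hence "((\<lambda>s. v (face_pt i (s + t) y)) has_real_derivative partial i v ?x) (at 0)"
    by (simp add: face_pt_add)
  thus ?thesis using DERIV_shift[of "\<lambda>t. v (face_pt i t y)" _ 0 t] by simp
qed

lemma mem_box_face_pt:
  "face_pt i t y \<in> box a b \<longleftrightarrow> a$i < t \<and> t < b$i \<and> (\<forall>j. j \<noteq> i \<longrightarrow> a$j < y j \<and> y j < b$j)"
  by (auto simp: mem_box_cart face_pt_def)

lemma face_box_sets[measurable]: "face_box a b i \<in> sets (face_measure i)"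
  unfolding face_box_def face_measure_def by (rule sets_PiM_I_finite) auto

lemma face_box_finite: "emeasure (face_measure i) (face_box a b i) < \<infinity>"
proof -
  interpret product_sigma_finite "\<lambda>_::'a. lborel::real measure" by standard
  show ?thesis unfolding face_box_def face_measure_def
    apply (subst emeasure_PiM)
    using emeasure_lborel_box_finite[where 'a=real] apply (auto simp: box_real)
    apply (subst less_top[symmetric])
    apply (subst ennreal_prod_eq_top)
    apply (auto simp: less_top[symmetric])
    done
qed

lemma face_integrable:
  fixes g :: "real^'n::finite \<Rightarrow> real"
  assumes g: "continuous_on UNIV g" and c: "a$i \<le> c" "c \<le> b$i"
  shows "integrable (face_measure i) (\<lambda>y. indicator (face_box a b i) y *\<^sub>R g (face_pt i c y))"
proof -
  have "compact (g ` cbox a b)" by (intro compact_continuous_image continuous_on_subset[OF g]) auto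
  then obtain B :: real where M: "\<And>x. x \<in> cbox a b \<Longrightarrow> norm (g x) \<le> B"
    by (meson bounded_iff compact_imp_bounded image_eqI)
  have mg[measurable]: "g \<in> borel_measurable borel" using g by (rule borel_measurable_continuous_onI)
  have i1: "integrable (face_measure i) (\<lambda>y. B * indicator (face_box a b i) y :: real)"
    using face_box_finite[of i a b] by (intro integrable_mult_right) auto
  have m1: "(\<lambda>y. indicator (face_box a b i) y *\<^sub>R g (face_pt i c y)) \<in> borel_measurable (face_measure i)"
    by measurable
  have ae: "AE y in face_measure i. norm (indicator (face_box a b i) y *\<^sub>R g (face_pt i c y))
             \<le> norm (B * indicator (face_box a b i) y :: real)"
  proof (rule AE_I2)
    fix y assume "y \<in> space (face_measure i)"
    show "norm (indicator (face_box a b i) y *\<^sub>R g (face_pt i c y)) \<le> norm (B * indicator (face_box a b i) y :: real)"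
    proof (cases "y \<in> face_box a b i")
      case True
      hence "face_pt i c y \<in> cbox a b" using c
        by (auto simp: face_box_def mem_box_cart face_pt_def PiE_def Pi_iff less_imp_le)
      then show ?thesis using True M[of "face_pt i c y"] by auto
    qed simp
  qed
  show ?thesis using Bochner_Integration.integrable_bound[OF i1 m1 ae] .
qed

lemma box_integrable:
  fixes g :: "real^'n::finite \<Rightarrow> real"
  assumes g: "continuous_on UNIV g"
  shows "integrable lborel (\<lambda>x. indicator (box a b) x *\<^sub>R g x)"
proof -
  have "integrable lborel (\<lambda>x. indicator (box a b) x *\<^sub>R (indicator (cbox a b) x *\<^sub>R g x))"
    by (intro integrable_mult_indicator borel_integrable_compact continuous_on_subset[OF g]) auto
  moreover have "(\<lambda>x. indicator (box a b) x *\<^sub>R (indicator (cbox a b) x *\<^sub>R g x)) = (\<lambda>x. indicator (box a b) x *\<^sub>R g x)"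
    using box_subset_cbox[of a b] by (auto simp: fun_eq_iff split: split_indicator)
  ultimately show ?thesis by simp
qed

lemma box_integrable_lebesgue:
  fixes g :: "real^'n::finite \<Rightarrow> real"
  assumes g: "continuous_on UNIV g"
  shows "set_integrable lebesgue (box a b) g"
proof -
  have [measurable]: "g \<in> borel_measurable borel" using g by (rule borel_measurable_continuous_onI)
  show ?thesis unfolding set_integrable_def
    using box_integrable[OF g] by (subst integrable_completion) auto
qed

lemma box_integral_lebesgue:
  fixes g :: "real^'n::finite \<Rightarrow> real"
  assumes g: "continuous_on UNIV g"
  shows "(LINT x:box a b|lebesgue. g x) = integral\<^sup>L lborel (\<lambda>x. indicator (box a b) x *\<^sub>R g x)"
proof -
  have [measurable]: "g \<in> borel_measurable borel" using g by (rule borel_measurable_continuous_onI)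
  show ?thesis unfolding set_lebesgue_integral_def
    by (subst integral_completion) auto
qed


lemma space_face_box:
  assumes "y \<in> space (face_measure i)"
  shows "y \<in> face_box a b i \<longleftrightarrow> (\<forall>j. j \<noteq> i \<longrightarrow> a$j < y j \<and> y j < b$j)"
  using assms by (auto simp: face_box_def face_measure_def space_PiM PiE_def Pi_iff)

lemma face_ineq:
  fixes a b :: "real^'n::finite" and v :: "real^'n \<Rightarrow> real"
  assumes ab: "a$i < 0" "0 < b$i"
    and L0: "0 \<le> L" and L: "L \<le> -a$i" "L \<le> b$i" and H: "-a$i \<le> H" "b$i \<le> H" and s: "s > 0"
    and v: "smooth_fun v"
  shows "L * ((LINT y:face_box a b i|face_measure i. (v (face_pt i (a$i) y))^2)
            + (LINT y:face_box a b i|face_measure i. (v (face_pt i (b$i) y))^2))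
         \<le> (1+s) * (LINT x:box a b|lebesgue. (v x)^2) + H^2/s * (LINT x:box a b|lebesgue. (partial i v x)^2)"
proof -
  define \<psi> where "\<psi> x = (1+s) * (v x)^2 + H^2/s * (partial i v x)^2" for x
  have cv: "continuous_on UNIV v" using v by (rule smooth_cont)
  have cp: "continuous_on UNIV (partial i v)" using v by (rule smooth_cont_partial)
  have cpsi: "continuous_on UNIV \<psi>" unfolding \<psi>_def by (intro continuous_intros cv cp)
  have mpsi[measurable]: "\<psi> \<in> borel_measurable borel" using cpsi by (rule borel_measurable_continuous_onI)
  have psi_nn: "0 \<le> \<psi> x" for x unfolding \<psi>_def using s by (intro add_nonneg_nonneg mult_nonneg_nonneg) auto
  define FA where "FA y = (v (face_pt i (a$i) y))^2" for y
  define FB where "FB y = (v (face_pt i (b$i) y))^2" for y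
  have cv2: "continuous_on UNIV (\<lambda>x. (v x)^2)" by (intro continuous_intros cv)
  have iA: "integrable (face_measure i) (\<lambda>y. indicator (face_box a b i) y *\<^sub>R FA y)"
    unfolding FA_def by (rule face_integrable[OF cv2]) (use ab in auto)
  have iB: "integrable (face_measure i) (\<lambda>y. indicator (face_box a b i) y *\<^sub>R FB y)"
    unfolding FB_def by (rule face_integrable[OF cv2]) (use ab in auto)
  have ipsi: "integrable lborel (\<lambda>x. indicator (box a b) x *\<^sub>R \<psi> x)" by (rule box_integrable[OF cpsi])
  have "(\<integral>\<^sup>+x. ennreal (indicator (box a b) x *\<^sub>R \<psi> x) \<partial>lborel)
         = ennreal (integral\<^sup>L lborel (\<lambda>x. indicator (box a b) x *\<^sub>R \<psi> x))"
    by (rule nn_integral_eq_integral[OF ipsi]) (auto simp: psi_nn)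
  also have "integral\<^sup>L lborel (\<lambda>x. indicator (box a b) x *\<^sub>R \<psi> x) = (LINT x:box a b|lebesgue. \<psi> x)"
    by (rule box_integral_lebesgue[OF cpsi, symmetric])
  finally have box_eq: "(\<integral>\<^sup>+x. ennreal (indicator (box a b) x *\<^sub>R \<psi> x) \<partial>lborel) = ennreal (LINT x:box a b|lebesgue. \<psi> x)" .
  have "(\<integral>\<^sup>+y. ennreal (indicator (face_box a b i) y *\<^sub>R (L * (FA y + FB y))) \<partial>face_measure i)
    \<le> (\<integral>\<^sup>+y. (\<integral>\<^sup>+t. ennreal (indicator (box a b) (face_pt i t y) *\<^sub>R \<psi> (face_pt i t y)) \<partial>lborel) \<partial>face_measure i)"
  proof (rule nn_integral_mono)
    fix y assume y: "y \<in> space (face_measure i)"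
    show "ennreal (indicator (face_box a b i) y *\<^sub>R (L * (FA y + FB y)))
          \<le> (\<integral>\<^sup>+t. ennreal (indicator (box a b) (face_pt i t y) *\<^sub>R \<psi> (face_pt i t y)) \<partial>lborel)"
    proof (cases "y \<in> face_box a b i")
      case False thus ?thesis by simp
    next
      case True
      hence yb: "\<forall>j. j \<noteq> i \<longrightarrow> a$j < y j \<and> y j < b$j" using space_face_box[OF y] by blast
      have ind: "indicator (box a b) (face_pt i t y) = (indicator {a$i<..<b$i} t :: real)" for t
        using yb by (auto simp: mem_box_face_pt split: split_indicator)
      obtain I where I: "((\<lambda>t. (1+s) * (v (face_pt i t y))^2 + H^2/s * (partial i v (face_pt i t y))^2) has_integral I) {a$i<..<b$i}"
        and IL: "L * ((v (face_pt i (a$i) y))^2 + (v (face_pt i (b$i) y))^2) \<le> I"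
      proof -
        have "continuous_on {a$i..b$i} (\<lambda>t. partial i v (face_pt i t y))"
          by (rule continuous_on_compose2[OF cp continuous_face_pt]) auto
        from one_dim[OF ab smooth_deriv[OF v, of i y] this L H s] that show ?thesis by blast
      qed
      have "(\<integral>\<^sup>+t. ennreal (indicator (box a b) (face_pt i t y) *\<^sub>R \<psi> (face_pt i t y)) \<partial>lborel)
          = (\<integral>\<^sup>+t. ennreal (\<psi> (face_pt i t y)) * indicator {a$i<..<b$i} t \<partial>lborel)"
        by (intro nn_integral_cong) (auto simp: ind split: split_indicator)
      also have "\<dots> = ennreal I"
        by (rule nn_integral_has_integral_lebesgue') (use I psi_nn in \<open>auto simp: \<psi>_def\<close>)
      finally show ?thesis using True IL by (simp add: FA_def FB_def ennreal_leI)
    qed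
  qed
  also have "\<dots> = (\<integral>\<^sup>+x. ennreal (indicator (box a b) x *\<^sub>R \<psi> x) \<partial>lborel)"
    by (rule nn_fubini_face[symmetric]) measurable
  also have "(\<integral>\<^sup>+y. ennreal (indicator (face_box a b i) y *\<^sub>R (L * (FA y + FB y))) \<partial>face_measure i)
     = ennreal (integral\<^sup>L (face_measure i) (\<lambda>y. indicator (face_box a b i) y *\<^sub>R (L * (FA y + FB y))))"
  proof (rule nn_integral_eq_integral)
    have X: "integrable (face_measure i) (\<lambda>y. L * (indicator (face_box a b i) y *\<^sub>R FA y + indicator (face_box a b i) y *\<^sub>R FB y))"
      using iA iB by auto
    have E: "(\<lambda>y. L * (indicator (face_box a b i) y *\<^sub>R FA y + indicator (face_box a b i) y *\<^sub>R FB y))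
        = (\<lambda>y. indicator (face_box a b i) y *\<^sub>R (L * (FA y + FB y)))"
      by (auto simp: fun_eq_iff algebra_simps)
    show "integrable (face_measure i) (\<lambda>y. indicator (face_box a b i) y *\<^sub>R (L * (FA y + FB y)))"
      by (subst E[symmetric]) (rule X)
    show "AE x in face_measure i. 0 \<le> indicator (face_box a b i) x *\<^sub>R (L * (FA x + FB x))"
      using L0 by (auto simp: FA_def FB_def)
  qed
  also have "integral\<^sup>L (face_measure i) (\<lambda>y. indicator (face_box a b i) y *\<^sub>R (L * (FA y + FB y)))
     = L * ((LINT y:face_box a b i|face_measure i. FA y) + (LINT y:face_box a b i|face_measure i. FB y))"
  proof -
    have "(\<lambda>y. indicator (face_box a b i) y *\<^sub>R (L * (FA y + FB y)))
        = (\<lambda>y. L * (indicator (face_box a b i) y *\<^sub>R FA y + indicator (face_box a b i) y *\<^sub>R FB y))"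
      by (auto simp: fun_eq_iff algebra_simps)
    thus ?thesis unfolding set_lebesgue_integral_def using iA iB by simp
  qed
  finally have main: "ennreal (L * ((LINT y:face_box a b i|face_measure i. FA y) + (LINT y:face_box a b i|face_measure i. FB y)))
     \<le> ennreal (LINT x:box a b|lebesgue. \<psi> x)" using box_eq by simp
  have psi_split: "(LINT x:box a b|lebesgue. \<psi> x) = (1+s) * (LINT x:box a b|lebesgue. (v x)^2) + H^2/s * (LINT x:box a b|lebesgue. (partial i v x)^2)"
  proof -
    have cp2: "continuous_on UNIV (\<lambda>x. (partial i v x)^2)" by (intro continuous_intros cp)
    have i1: "integrable lborel (\<lambda>x. indicator (box a b) x *\<^sub>R (v x)^2)" by (rule box_integrable[OF cv2])
    have i2: "integrable lborel (\<lambda>x. indicator (box a b) x *\<^sub>R (partial i v x)^2)" by (rule box_integrable[OF cp2])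
    have "(\<lambda>x. indicator (box a b) x *\<^sub>R \<psi> x) = (\<lambda>x. (1+s) * (indicator (box a b) x *\<^sub>R (v x)^2) + H^2/s * (indicator (box a b) x *\<^sub>R (partial i v x)^2))"
      by (auto simp: fun_eq_iff \<psi>_def algebra_simps)
    hence "integral\<^sup>L lborel (\<lambda>x. indicator (box a b) x *\<^sub>R \<psi> x) = (1+s) * integral\<^sup>L lborel (\<lambda>x. indicator (box a b) x *\<^sub>R (v x)^2) + H^2/s * integral\<^sup>L lborel (\<lambda>x. indicator (box a b) x *\<^sub>R (partial i v x)^2)"
      using i1 i2 by simp
    thus ?thesis using box_integral_lebesgue[OF cpsi] box_integral_lebesgue[OF cv2] box_integral_lebesgue[OF cp2] by simp
  qed
  have "0 \<le> (LINT x:box a b|lebesgue. \<psi> x)"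
    unfolding set_lebesgue_integral_def using psi_nn by (intro Bochner_Integration.integral_nonneg) auto
  with main have "L * ((LINT y:face_box a b i|face_measure i. FA y) + (LINT y:face_box a b i|face_measure i. FB y))
     \<le> (LINT x:box a b|lebesgue. \<psi> x)" by simp
  thus ?thesis unfolding psi_split FA_def FB_def .
qed


lemma hbar_facts:
  fixes a b :: "real^'n::finite"
  assumes "0 \<in> box a b"
  shows "a$i < 0" "0 < b$i" "0 < hbar_lo a b" "hbar_lo a b \<le> -a$i" "hbar_lo a b \<le> b$i"
    "-a$i \<le> hbar_hi a b" "b$i \<le> hbar_hi a b"
proof -
  have ab: "a$j < 0" "0 < b$j" for j using assms by (auto simp: mem_box_cart)
  show "a$i < 0" "0 < b$i" by (rule ab)+
  have fin: "finite (range (\<lambda>i. min \<bar>a$i\<bar> \<bar>b$i\<bar>))" "finite (range (\<lambda>i. max \<bar>a$i\<bar> \<bar>b$i\<bar>))" by auto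
  have "hbar_lo a b \<in> range (\<lambda>i. min \<bar>a$i\<bar> \<bar>b$i\<bar>)" unfolding hbar_lo_def by (rule Min_in[OF fin(1)]) auto
  then obtain j where "hbar_lo a b = min \<bar>a$j\<bar> \<bar>b$j\<bar>" by auto
  thus "0 < hbar_lo a b" using ab[of j] by auto
  have "hbar_lo a b \<le> min \<bar>a$i\<bar> \<bar>b$i\<bar>" unfolding hbar_lo_def by (rule Min_le[OF fin(1)]) auto
  thus "hbar_lo a b \<le> -a$i" "hbar_lo a b \<le> b$i" using ab[of i] by auto
  have "max \<bar>a$i\<bar> \<bar>b$i\<bar> \<le> hbar_hi a b" unfolding hbar_hi_def by (rule Max_ge[OF fin(2)]) auto
  thus "-a$i \<le> hbar_hi a b" "b$i \<le> hbar_hi a b" using ab[of i] by auto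
qed

lemma smooth_bound:
  fixes a b :: "real^'n::finite" and v :: "real^'n \<Rightarrow> real"
  assumes box: "0 \<in> box a b" and v: "smooth_fun v"
  shows "hbar_lo a b * bdry_sq_norm a b v \<le> (real CARD('n) + (hbar_hi a b)^2) *
     ((LINT x:box a b|lebesgue. (\<Sum>i\<in>UNIV. (partial i v x)^2)) + (LINT x:box a b|lebesgue. (v x)^2))"
proof -
  let ?L = "hbar_lo a b" and ?H = "hbar_hi a b" and ?d = "real CARD('n)"
  define s where "s = ?H^2 / ?d"
  have Hpos: "?H > 0" using hbar_facts(2,7)[OF box] by (meson less_le_trans)
  have dpos: "?d > 0" by simp
  have s: "s > 0" unfolding s_def using Hpos dpos by simp
  define P where "P = (LINT x:box a b|lebesgue. (v x)^2)"
  define Q where "Q i = (LINT x:box a b|lebesgue. (partial i v x)^2)" for i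
  define FA where "FA i = (LINT y:face_box a b i|face_measure i. (v (face_pt i (a$i) y))^2)" for i
  define FB where "FB i = (LINT y:face_box a b i|face_measure i. (v (face_pt i (b$i) y))^2)" for i
  have cp2: "continuous_on UNIV (\<lambda>x. (partial i v x)^2)" for i
    by (intro continuous_intros smooth_cont_partial[OF v])
  have Qnn: "0 \<le> Q i" for i
    unfolding Q_def set_lebesgue_integral_def by (intro Bochner_Integration.integral_nonneg) auto
  have per: "?L * (FA i + FB i) \<le> (1+s) * P + ?d * Q i" for i
  proof -
    have "?L * (FA i + FB i) \<le> (1+s) * P + ?H^2/s * Q i"
      unfolding FA_def FB_def P_def Q_def
      using hbar_facts(1,2,4-7)[OF box, where i=i] hbar_facts(3)[OF box] s v by (intro face_ineq) auto
    also have "?H^2/s = ?d" unfolding s_def using Hpos dpos by simp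
    finally show ?thesis .
  qed
  have "?L * bdry_sq_norm a b v = (\<Sum>i\<in>UNIV. ?L * (FA i + FB i))"
    unfolding bdry_sq_norm_def FA_def FB_def by (simp add: sum_distrib_left)
  also have "\<dots> \<le> (\<Sum>i\<in>UNIV. (1+s) * P + ?d * Q i)" by (rule sum_mono[OF per])
  also have "\<dots> = ?d * (1+s) * P + ?d * (\<Sum>i\<in>UNIV. Q i)"
    by (simp add: sum.distrib sum_distrib_left)
  also have "?d * (1+s) = ?d + ?H^2" unfolding s_def using dpos by (simp add: field_simps)
  also have "(?d + ?H^2) * P + ?d * (\<Sum>i\<in>UNIV. Q i) \<le> (?d + ?H^2) * ((\<Sum>i\<in>UNIV. Q i) + P)"
  proof -
    have "0 \<le> (\<Sum>i\<in>UNIV. Q i)" by (rule sum_nonneg) (use Qnn in auto)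
    hence "?d * (\<Sum>i\<in>UNIV. Q i) \<le> (?d + ?H^2) * (\<Sum>i\<in>UNIV. Q i)" by (intro mult_right_mono) auto
    thus ?thesis by (simp add: algebra_simps)
  qed
  also have "(\<Sum>i\<in>UNIV. Q i) = (LINT x:box a b|lebesgue. (\<Sum>i\<in>UNIV. (partial i v x)^2))"
  proof -
    have "(\<Sum>i\<in>UNIV. Q i) = (\<Sum>i\<in>UNIV. integral\<^sup>L lborel (\<lambda>x. indicator (box a b) x *\<^sub>R (partial i v x)^2))"
      unfolding Q_def using box_integral_lebesgue[OF cp2] by simp
    also have "\<dots> = integral\<^sup>L lborel (\<lambda>x. \<Sum>i\<in>UNIV. indicator (box a b) x *\<^sub>R (partial i v x)^2)"
      by (rule Bochner_Integration.integral_sum[symmetric]) (rule box_integrable[OF cp2])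
    also have "\<dots> = integral\<^sup>L lborel (\<lambda>x. indicator (box a b) x *\<^sub>R (\<Sum>i\<in>UNIV. (partial i v x)^2))"
      by (simp add: sum_distrib_left)
    also have "\<dots> = (LINT x:box a b|lebesgue. (\<Sum>i\<in>UNIV. (partial i v x)^2))"
      by (rule box_integral_lebesgue[symmetric]) (intro continuous_intros smooth_cont_partial[OF v])
    finally show ?thesis .
  qed
  finally show ?thesis unfolding P_def .
qed


lemma young_pt:
  fixes p q e :: real assumes e: "e > 0"
  shows "(p + q)^2 \<le> (1+e) * p^2 + (1 + 1/e) * q^2"
proof -
  have "0 \<le> (e*p - q)^2" by simp
  hence "2 * e * (p * q) \<le> e^2 * p^2 + q^2" by (simp add: power2_eq_square algebra_simps)
  hence "2 * (p * q) \<le> e * p^2 + q^2 / e" using e by (simp add: field_simps power2_eq_square)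
  thus ?thesis using e by (simp add: power2_eq_square field_simps)
qed

lemma young_int:
  fixes f g :: "'a \<Rightarrow> real"
  assumes e: "e > 0" and fi: "integrable M (\<lambda>x. (f x)^2)" and gi: "integrable M (\<lambda>x. (g x)^2)"
    and fm: "f \<in> borel_measurable M" and gm: "g \<in> borel_measurable M"
  shows "integrable M (\<lambda>x. (f x - g x)^2)"
    and "integral\<^sup>L M (\<lambda>x. (f x)^2) \<le> (1+e) * integral\<^sup>L M (\<lambda>x. (g x)^2) + (1 + 1/e) * integral\<^sup>L M (\<lambda>x. (f x - g x)^2)"
proof -
  have b: "integrable M (\<lambda>x. 2 * (f x)^2 + 2 * (g x)^2)" using fi gi by auto
  have "(\<lambda>x. (f x - g x)^2) \<in> borel_measurable M" using fm gm by measurable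
  moreover have "AE x in M. norm ((f x - g x)^2) \<le> norm (2 * (f x)^2 + 2 * (g x)^2)"
  proof (rule AE_I2)
    fix x
    have "(f x - g x)^2 \<le> 2 * (f x)^2 + 2 * (g x)^2"
      using young_pt[of 1 "f x" "- g x"] by simp
    thus "norm ((f x - g x)^2) \<le> norm (2 * (f x)^2 + 2 * (g x)^2)" by simp
  qed
  ultimately show di: "integrable M (\<lambda>x. (f x - g x)^2)"
    using Bochner_Integration.integrable_bound[OF b] by blast
  have "integral\<^sup>L M (\<lambda>x. (f x)^2) \<le> integral\<^sup>L M (\<lambda>x. (1+e) * (g x)^2 + (1 + 1/e) * (f x - g x)^2)"
    using fi gi di young_pt[OF e, of "g x" "f x - g x" for x] by (intro integral_mono) auto
  also have "\<dots> = (1+e) * integral\<^sup>L M (\<lambda>x. (g x)^2) + (1 + 1/e) * integral\<^sup>L M (\<lambda>x. (f x - g x)^2)"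
    using gi di by simp
  finally show "integral\<^sup>L M (\<lambda>x. (f x)^2) \<le> (1+e) * integral\<^sup>L M (\<lambda>x. (g x)^2) + (1 + 1/e) * integral\<^sup>L M (\<lambda>x. (f x - g x)^2)" .
qed

lemma set_to_restrict:
  fixes f :: "'a \<Rightarrow> real"
  assumes "A \<in> sets M"
  shows "(LINT x:A|M. f x) = integral\<^sup>L (restrict_space M A) f"
    and "set_integrable M A f \<longleftrightarrow> integrable (restrict_space M A) f"
  using assms by (simp_all add: set_lebesgue_integral_def set_integrable_def integral_restrict_space integrable_restrict_space sets.Int_space_eq2)

lemma box_sets_lebesgue: "box a b \<in> sets lebesgue"
  by simp


theorem lemma5p1:
  fixes a b :: "real^'n::finite"
    and u :: "real^'n \<Rightarrow> real"
    and G :: "'n \<Rightarrow> real^'n \<Rightarrow> real"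
    and tr :: "real^'n \<Rightarrow> real"
  assumes "0 \<in> box a b"
    and "H1 (box a b) u G"
    and "is_trace a b u G tr"
  shows "sqrt (bdry_sq_norm a b tr)
           \<le> sqrt ((real CARD('n) + (hbar_hi a b)^2) / hbar_lo a b) * h1_norm (box a b) u G"
proof -
  note box = assms(1)
  let ?L = "hbar_lo a b" and ?H = "hbar_hi a b"
  define K where "K = real CARD('n) + (hbar_hi a b)^2"
  have Lpos: "?L > 0" using hbar_facts(3)[OF box] .
  have Kpos: "K > 0" unfolding K_def by (simp add: add_pos_nonneg)
  have ab: "a$i < b$i" for i using hbar_facts(1,2)[OF box, where i=i] by linarith
  define \<Omega> where "\<Omega> = box a b"
  define R where "R = restrict_space lebesgue \<Omega>"
  have \<Omega>s: "\<Omega> \<in> sets lebesgue" unfolding \<Omega>_def by simp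
  have conv: "(LINT x:\<Omega>|lebesgue. f x) = integral\<^sup>L R f" for f :: "_ \<Rightarrow> real"
    unfolding R_def using set_to_restrict(1)[OF \<Omega>s] .
  have convi: "set_integrable lebesgue \<Omega> f \<longleftrightarrow> integrable R f" for f :: "_ \<Rightarrow> real"
    unfolding R_def using set_to_restrict(2)[OF \<Omega>s] .
  from assms(2) have Lu: "L2_on \<Omega> u" and LG: "\<And>i. L2_on \<Omega> (G i)"
    unfolding H1_def weak_grad_def \<Omega>_def by auto
  have um: "u \<in> borel_measurable R" using Lu unfolding L2_on_def R_def by auto
  have ui: "integrable R (\<lambda>x. (u x)^2)" using Lu unfolding L2_on_def convi[symmetric] by auto
  have Gm: "G i \<in> borel_measurable R" for i using LG[of i] unfolding L2_on_def R_def by auto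
  have Gi: "integrable R (\<lambda>x. (G i x)^2)" for i using LG[of i] unfolding L2_on_def convi[symmetric] by auto
  from assms(3) obtain v where bd: "bdry_L2 a b tr" and sm: "\<And>n. smooth_fun (v n)"
    and hlim: "(\<lambda>n. h1_norm (box a b) (\<lambda>x. v n x - u x) (\<lambda>i x. partial i (v n) x - G i x)) \<longlonglongrightarrow> 0"
    and blim: "(\<lambda>n. sqrt (bdry_sq_norm a b (\<lambda>x. v n x - tr x))) \<longlonglongrightarrow> 0"
    unfolding is_trace_def by blast
  have vm: "v n \<in> borel_measurable R" for n
    unfolding R_def by (rule continuous_imp_measurable_on_sets_lebesgue[OF continuous_on_subset[OF smooth_cont[OF sm] subset_UNIV] \<Omega>s])
  have pm: "partial i (v n) \<in> borel_measurable R" for i n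
    unfolding R_def by (rule continuous_imp_measurable_on_sets_lebesgue[OF continuous_on_subset[OF smooth_cont_partial[OF sm] subset_UNIV] \<Omega>s])
  have vi: "integrable R (\<lambda>x. (v n x)^2)" for n
    unfolding convi[symmetric] \<Omega>_def by (intro box_integrable_lebesgue continuous_intros smooth_cont[OF sm])
  have pi: "integrable R (\<lambda>x. (partial i (v n) x)^2)" for i n
    unfolding convi[symmetric] \<Omega>_def by (intro box_integrable_lebesgue continuous_intros smooth_cont_partial[OF sm])
  define F where "F i = restrict_space (face_measure i) (face_box a b i)" for i
  have fconv: "(LINT y:face_box a b i|face_measure i. f y) = integral\<^sup>L (F i) f" for i and f :: "_ \<Rightarrow> real"
    unfolding F_def using set_to_restrict(1)[OF face_box_sets] .
  have fconvi: "set_integrable (face_measure i) (face_box a b i) f \<longleftrightarrow> integrable (F i) f" for i and f :: "_ \<Rightarrow> real"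
    unfolding F_def using set_to_restrict(2)[OF face_box_sets] .
  have trm: "(\<lambda>y. tr (face_pt i c y)) \<in> borel_measurable (F i)" if "c \<in> {a$i, b$i}" for i c
    using bd that unfolding bdry_L2_def F_def by (auto intro: measurable_restrict_space1)
  have tri: "integrable (F i) (\<lambda>y. (tr (face_pt i c y))^2)" if "c \<in> {a$i, b$i}" for i c
    using bd that unfolding bdry_L2_def fconvi by auto
  have vfm: "(\<lambda>y. v n (face_pt i c y)) \<in> borel_measurable (F i)" for n i c
  proof -
    have [measurable]: "v n \<in> borel_measurable borel" by (rule borel_measurable_continuous_onI[OF smooth_cont[OF sm]])
    show ?thesis unfolding F_def by (rule measurable_restrict_space1) measurable
  qed
  have vfi: "integrable (F i) (\<lambda>y. (v n (face_pt i c y))^2)" if "c \<in> {a$i, b$i}" for n i c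
    unfolding fconvi[symmetric] set_integrable_def
    using that ab[of i] by (intro face_integrable continuous_intros smooth_cont[OF sm]) auto
  define Nt where "Nt = bdry_sq_norm a b tr"
  define Nv where "Nv n = bdry_sq_norm a b (v n)" for n
  define Nd where "Nd n = bdry_sq_norm a b (\<lambda>x. v n x - tr x)" for n
  define Hu where "Hu = (LINT x:\<Omega>|lebesgue. (\<Sum>i\<in>UNIV. (G i x)^2)) + (LINT x:\<Omega>|lebesgue. (u x)^2)"
  define Hv where "Hv n = (LINT x:\<Omega>|lebesgue. (\<Sum>i\<in>UNIV. (partial i (v n) x)^2)) + (LINT x:\<Omega>|lebesgue. (v n x)^2)" for n
  define Hd where "Hd n = (LINT x:\<Omega>|lebesgue. (\<Sum>i\<in>UNIV. (partial i (v n) x - G i x)^2)) + (LINT x:\<Omega>|lebesgue. (v n x - u x)^2)" for n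
  have key: "?L * Nt \<le> (1+e) * K * ((1+e) * Hu + (1 + 1/e) * Hd n) + (1 + 1/e) * ?L * Nd n"
    if e: "e > 0" for e n
  proof -
    have a: "Nt \<le> (1+e) * Nv n + (1 + 1/e) * Nd n"
    proof -
      have fc: "(LINT y:face_box a b i|face_measure i. (tr (face_pt i c y))^2) \<le> (1+e) * (LINT y:face_box a b i|face_measure i. (v n (face_pt i c y))^2) + (1+1/e) * (LINT y:face_box a b i|face_measure i. (v n (face_pt i c y) - tr (face_pt i c y))^2)"
        if c: "c \<in> {a$i, b$i}" for i c
      proof -
        have eq: "(\<lambda>y. (tr (face_pt i c y) - v n (face_pt i c y))^2) = (\<lambda>y. (v n (face_pt i c y) - tr (face_pt i c y))^2)"
          by (simp add: power2_commute)
        note X = young_int(2)[OF e tri[OF c] vfi[OF c, where n=n] trm[OF c] vfm[where n=n]]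
        show ?thesis unfolding fconv eq[symmetric] by (rule X)
      qed
      have "Nt \<le> (\<Sum>i\<in>UNIV. (1+e) * ((LINT y:face_box a b i|face_measure i. (v n (face_pt i (a$i) y))^2) + (LINT y:face_box a b i|face_measure i. (v n (face_pt i (b$i) y))^2))
           + (1+1/e) * ((LINT y:face_box a b i|face_measure i. (v n (face_pt i (a$i) y) - tr (face_pt i (a$i) y))^2) + (LINT y:face_box a b i|face_measure i. (v n (face_pt i (b$i) y) - tr (face_pt i (b$i) y))^2)))"
        unfolding Nt_def bdry_sq_norm_def
      proof (rule sum_mono)
        fix i
        show "(LINT y:face_box a b i|face_measure i. (tr (face_pt i (a$i) y))^2) + (LINT y:face_box a b i|face_measure i. (tr (face_pt i (b$i) y))^2)
          \<le> (1+e) * ((LINT y:face_box a b i|face_measure i. (v n (face_pt i (a$i) y))^2) + (LINT y:face_box a b i|face_measure i. (v n (face_pt i (b$i) y))^2))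
           + (1+1/e) * ((LINT y:face_box a b i|face_measure i. (v n (face_pt i (a$i) y) - tr (face_pt i (a$i) y))^2) + (LINT y:face_box a b i|face_measure i. (v n (face_pt i (b$i) y) - tr (face_pt i (b$i) y))^2))"
          using fc[of "a$i" i] fc[of "b$i" i] by (simp add: algebra_simps)
      qed
      also have "\<dots> = (1+e) * Nv n + (1 + 1/e) * Nd n"
        unfolding Nv_def Nd_def bdry_sq_norm_def by (simp add: sum.distrib sum_distrib_left distrib_left)
      finally show ?thesis .
    qed
    have b: "Hv n \<le> (1+e) * Hu + (1 + 1/e) * Hd n"
    proof -
      have sumI: "(LINT x:\<Omega>|lebesgue. \<Sum>i\<in>UNIV. h i x) = (\<Sum>i\<in>UNIV. integral\<^sup>L R (h i))"
        if "\<And>i. integrable R (h i)" for h :: "'n \<Rightarrow> _ \<Rightarrow> real"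
        unfolding conv using that by (rule Bochner_Integration.integral_sum)
      have pG: "integrable R (\<lambda>x. (partial i (v n) x - G i x)^2)" for i
        using young_int(1)[OF e pi Gi pm Gm] .
      have vu: "integrable R (\<lambda>x. (v n x - u x)^2)"
        using young_int(1)[OF e vi ui vm um] .
      have Hv': "Hv n = (\<Sum>i\<in>UNIV. integral\<^sup>L R (\<lambda>x. (partial i (v n) x)^2)) + integral\<^sup>L R (\<lambda>x. (v n x)^2)"
        unfolding Hv_def by (subst sumI) (auto simp: pi conv)
      have Hu': "Hu = (\<Sum>i\<in>UNIV. integral\<^sup>L R (\<lambda>x. (G i x)^2)) + integral\<^sup>L R (\<lambda>x. (u x)^2)"
        unfolding Hu_def by (subst sumI) (auto simp: Gi conv)
      have Hd': "Hd n = (\<Sum>i\<in>UNIV. integral\<^sup>L R (\<lambda>x. (partial i (v n) x - G i x)^2)) + integral\<^sup>L R (\<lambda>x. (v n x - u x)^2)"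
        unfolding Hd_def by (subst sumI) (auto simp: pG conv)
      have "Hv n \<le> (\<Sum>i\<in>UNIV. (1+e) * integral\<^sup>L R (\<lambda>x. (G i x)^2) + (1+1/e) * integral\<^sup>L R (\<lambda>x. (partial i (v n) x - G i x)^2))
          + ((1+e) * integral\<^sup>L R (\<lambda>x. (u x)^2) + (1+1/e) * integral\<^sup>L R (\<lambda>x. (v n x - u x)^2))"
        unfolding Hv'
        by (intro add_mono sum_mono young_int(2)[OF e pi Gi pm Gm] young_int(2)[OF e vi ui vm um])
      also have "\<dots> = (1+e) * Hu + (1 + 1/e) * Hd n"
        unfolding Hu' Hd' by (simp add: sum.distrib sum_distrib_left algebra_simps)
      finally show ?thesis .
    qed
    have c: "?L * Nv n \<le> K * Hv n"
      using smooth_bound[OF box sm[of n]] unfolding Nv_def Hv_def K_def \<Omega>_def .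
    have "?L * Nt \<le> (1+e) * (?L * Nv n) + (1 + 1/e) * ?L * Nd n"
      using mult_left_mono[OF a, of ?L] Lpos by (simp add: algebra_simps)
    also have "\<dots> \<le> (1+e) * (K * Hv n) + (1 + 1/e) * ?L * Nd n"
      using c e by (intro add_right_mono mult_left_mono) auto
    also have "\<dots> \<le> (1+e) * (K * ((1+e) * Hu + (1 + 1/e) * Hd n)) + (1 + 1/e) * ?L * Nd n"
      using b e Kpos by (intro add_right_mono mult_left_mono) auto
    finally show ?thesis by (simp only: mult.assoc)
  qed
  have lnn: "0 \<le> (LINT x:A|M. f x)" if "\<And>x. 0 \<le> f x" for A M and f :: "_ \<Rightarrow> real"
    unfolding set_lebesgue_integral_def using that by (intro Bochner_Integration.integral_nonneg) auto
  have Hd_nn: "0 \<le> Hd n" for n unfolding Hd_def by (intro add_nonneg_nonneg lnn sum_nonneg) auto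
  have Nd_nn: "0 \<le> Nd n" for n unfolding Nd_def bdry_sq_norm_def by (intro add_nonneg_nonneg lnn sum_nonneg) auto
  have Hu_nn: "0 \<le> Hu" unfolding Hu_def by (intro add_nonneg_nonneg lnn sum_nonneg) auto
  have hd: "Hd \<longlonglongrightarrow> 0"
  proof -
    have "(\<lambda>n. (h1_norm (box a b) (\<lambda>x. v n x - u x) (\<lambda>i x. partial i (v n) x - G i x))^2) \<longlonglongrightarrow> 0^2"
      by (intro tendsto_intros hlim)
    moreover have "(h1_norm (box a b) (\<lambda>x. v n x - u x) (\<lambda>i x. partial i (v n) x - G i x))^2 = Hd n" for n
      unfolding h1_norm_def Hd_def \<Omega>_def using Hd_nn[of n] unfolding Hd_def \<Omega>_def by simp
    ultimately show ?thesis by simp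
  qed
  have nd: "Nd \<longlonglongrightarrow> 0"
  proof -
    have "(\<lambda>n. (sqrt (bdry_sq_norm a b (\<lambda>x. v n x - tr x)))^2) \<longlonglongrightarrow> 0^2"
      by (intro tendsto_intros blim)
    moreover have "(sqrt (bdry_sq_norm a b (\<lambda>x. v n x - tr x)))^2 = Nd n" for n
      using Nd_nn[of n] unfolding Nd_def by simp
    ultimately show ?thesis by simp
  qed
  have lim_e: "?L * Nt \<le> (1+e)^2 * K * Hu" if e: "e > 0" for e
  proof -
    have "(\<lambda>n. (1+e) * K * ((1+e) * Hu + (1 + 1/e) * Hd n) + (1 + 1/e) * ?L * Nd n)
        \<longlonglongrightarrow> (1+e) * K * ((1+e) * Hu + (1 + 1/e) * 0) + (1 + 1/e) * ?L * 0"
      by (intro tendsto_intros hd nd)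
    hence "?L * Nt \<le> (1+e) * K * ((1+e) * Hu + (1 + 1/e) * 0) + (1 + 1/e) * ?L * 0"
      by (rule LIMSEQ_le_const) (use key[OF e] in auto)
    thus ?thesis by (simp add: power2_eq_square algebra_simps)
  qed
  have LN: "?L * Nt \<le> K * Hu"
  proof -
    have "(\<lambda>n. (1 + inverse (real (Suc n)))^2 * K * Hu) \<longlonglongrightarrow> (1 + 0)^2 * K * Hu"
      by (intro tendsto_intros LIMSEQ_inverse_real_of_nat)
    hence "?L * Nt \<le> (1 + 0)^2 * K * Hu"
      by (rule LIMSEQ_le_const) (use lim_e in auto)
    thus ?thesis by simp
  qed
  have "Nt \<le> K / ?L * Hu" using LN Lpos by (simp add: field_simps mult.commute)
  hence "sqrt Nt \<le> sqrt (K / ?L * Hu)" by (rule real_sqrt_le_mono)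
  also have "\<dots> = sqrt (K / ?L) * h1_norm (box a b) u G"
    unfolding h1_norm_def by (simp only: real_sqrt_mult Hu_def \<Omega>_def)
  finally show ?thesis unfolding Nt_def K_def .
qed

end
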